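(* Let $(X,d,\mu)$ be a metric measure space satisfying a Poincaré inequality of type $(1,p)$ for some $1\le p<\infty$. If $x\in X$ satisfies $\liminf_{r\to0}\mu(B_r(x))/r^p=0$, then $x$ is not a local cut point.
   Context: Here $(X,d)$ is a complete, locally compact length space with a Borel measure $\mu$ such that $0<\mu(B_r(x))<\infty$ for all $x\in X$, $0<r<\infty$ ($B_r(x)$ the open ball). Paths are assumed parametrized proportionally to arclength. For a function $u$ on $X$, a Borel function $g:X\to[0,\infty]$ is an upper gradient of $u$ if $|u(\gamma(l))-u(\gamma(0))|\le\int_0^l g(\gamma(t))\,dt$ for every path $\gamma:[0,l]\to X$. For $B\subset X$ write $u_B=\mu(B)^{-1}\int_B u\,d\mu$ and $\fint_B f\,d\mu=\mu(B)^{-1}\int_B f\,d\mu$. $(X,d,\mu)$ satisfies a Poincaré inequality of type $(1,p)$ if for every $R>0$ there is $C_P=C_P(p,R)>0$ such that $\fint_{B_r(x)}|u-u_{B_r(x)}|\,d\mu\le C_P\,r\big(\fint_{B_r(x)}g^p\,d\mu\big)^{1/p}$ for all $x\in X$, $0<r\le R$, all measurable functions $u$ and all upper gradients $g$ of $u$. A point $x\in X$ is a local cut point if $U\setminus\{x\}$ is disconnected for some connected neighborhood $U$ of $x$. *)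

theory Defs
  imports "HOL-Analysis.Analysis" "HOL-Probability.Probability"
begin

definition curve_length :: "(real \<Rightarrow> 'a::metric_space) \<Rightarrow> real \<Rightarrow> real \<Rightarrow> ennreal" where
  "curve_length \<gamma> a b =
     (SUP ts \<in> {ts. sorted ts \<and> set ts \<subseteq> {a..b}}.
        ennreal (sum_list (map2 (\<lambda>s t. dist (\<gamma> s) (\<gamma> t)) ts (tl ts))))"

definition length_space :: "'a::metric_space itself \<Rightarrow> bool" where
  "length_space _ \<longleftrightarrow> (\<forall>x y::'a. ennreal (dist x y) =
      (INF \<gamma> \<in> {\<gamma>. path \<gamma> \<and> pathstart \<gamma> = x \<and> pathfinish \<gamma> = y}. curve_length \<gamma> 0 1))"

definition arclength_path :: "(real \<Rightarrow> 'a::metric_space) \<Rightarrow> real \<Rightarrow> bool" where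
  "arclength_path \<gamma> l \<longleftrightarrow> 0 \<le> l \<and>
     (\<forall>s t. 0 \<le> s \<and> s \<le> t \<and> t \<le> l \<longrightarrow> curve_length \<gamma> s t = ennreal (t - s))"

definition upper_gradient :: "('a::metric_space \<Rightarrow> real) \<Rightarrow> ('a \<Rightarrow> ennreal) \<Rightarrow> bool" where
  "upper_gradient u g \<longleftrightarrow> g \<in> borel_measurable borel \<and>
     (\<forall>\<gamma> l. arclength_path \<gamma> l \<longrightarrow>
        ennreal \<bar>u (\<gamma> l) - u (\<gamma> 0)\<bar> \<le> (\<integral>\<^sup>+ t\<in>{0..l}. g (\<gamma> t) \<partial>lborel))"

text \<open>Real power on [0,\<infinity>], with \<infinity> powr p = \<infinity> (used for p > 0 only).\<close>
definition enn_powr :: "ennreal \<Rightarrow> real \<Rightarrow> ennreal" where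
  "enn_powr a p = (if a = \<infinity> then \<infinity> else ennreal (enn2real a powr p))"

text \<open>Mean value u_B (Bochner integral; only meaningful when u is integrable on B).\<close>
definition ball_mean :: "'a measure \<Rightarrow> 'a set \<Rightarrow> ('a \<Rightarrow> real) \<Rightarrow> real" where
  "ball_mean M B u = (\<integral>x\<in>B. u x \<partial>M) / measure M B"

text \<open>Poincare inequality of type (1,p). The left-hand side is the nonnegative integral of
 |u - u_B| divided by \<mu>(B); it is \<infinity> whenever u is not integrable on B.\<close>
definition poincare_1p :: "'a::metric_space measure \<Rightarrow> real \<Rightarrow> bool" where
  "poincare_1p M p \<longleftrightarrow> (\<forall>R>0. \<exists>C>0. \<forall>x r u g. 0 < r \<and> r \<le> R \<and>
      u \<in> borel_measurable M \<and> upper_gradient u g \<longrightarrow>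
      (\<integral>\<^sup>+ y\<in>ball x r. ennreal \<bar>u y - ball_mean M (ball x r) u\<bar> \<partial>M) / emeasure M (ball x r)
        \<le> ennreal (C * r) *
           enn_powr ((\<integral>\<^sup>+ y\<in>ball x r. enn_powr (g y) p \<partial>M) / emeasure M (ball x r)) (1 / p))"

definition local_cut_point :: "'a::topological_space \<Rightarrow> bool" where
  "local_cut_point x \<longleftrightarrow> (\<exists>U. connected U \<and> x \<in> interior U \<and> \<not> connected (U - {x}))"

end

theory Submission
  imports Defs
begin


lemma lip_gamma:
  assumes "arclength_path \<gamma> l" "0 \<le> s" "s \<le> t" "t \<le> l"
  shows "dist (\<gamma> s) (\<gamma> t) \<le> t - s"
proof -
  have "ennreal (dist (\<gamma> s) (\<gamma> t)) \<le> curve_length \<gamma> s t"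
    unfolding curve_length_def
    by (rule SUP_upper2[of "[s,t]"]) (use assms in auto)
  also have "\<dots> = ennreal (t - s)" using assms unfolding arclength_path_def by auto
  finally show ?thesis using assms by simp
qed

lemma int_add:
  fixes G :: "real \<Rightarrow> ennreal"
  assumes Gm: "G \<in> borel_measurable borel" and "a \<le> b" "b \<le> c"
  shows "set_nn_integral lborel {a..b} G + set_nn_integral lborel {b..c} G = set_nn_integral lborel {a..c} G"
proof -
  have "set_nn_integral lborel {b..c} G = set_nn_integral lborel {b<..c} G"
    apply (rule nn_integral_cong_AE)
    using AE_lborel_singleton[of b] by (auto elim!: eventually_mono simp: indicator_def)
  moreover have "set_nn_integral lborel {a..c} G = (\<integral>\<^sup>+x. G x * indicator {a..b} x + G x * indicator {b<..c} x \<partial>lborel)"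
    apply (rule nn_integral_cong) using assms by (auto simp: indicator_def)
  moreover have "\<dots> = set_nn_integral lborel {a..b} G + set_nn_integral lborel {b<..c} G"
    by (rule nn_integral_add) (use Gm in auto)
  ultimately show ?thesis by simp
qed

lemma chain:
  fixes h :: "real \<Rightarrow> real" and G :: "real \<Rightarrow> ennreal"
  assumes Gm: "G \<in> borel_measurable borel" and l: "0 \<le> l"
  and loc: "\<And>t. 0 \<le> t \<Longrightarrow> t \<le> l \<Longrightarrow> \<exists>\<delta>>0. \<forall>s. 0 \<le> s \<and> s \<le> l \<and> \<bar>s - t\<bar> < \<delta> \<longrightarrow>
        ennreal \<bar>h s - h t\<bar> \<le> set_nn_integral lborel {min s t..max s t} G"
  shows "ennreal \<bar>h l - h 0\<bar> \<le> set_nn_integral lborel {0..l} G"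
proof -
  define I where "I a b = set_nn_integral lborel {a..b} G" for a b
  have add: "I a b + I b c = I a c" if "a \<le> b" "b \<le> c" for a b c
    unfolding I_def using int_add[OF Gm that] .
  have tri: "ennreal \<bar>h c - h 0\<bar> \<le> I a c + I 0 a"
    if "0 \<le> a" "a \<le> c" "ennreal \<bar>h c - h a\<bar> \<le> I a c" "ennreal \<bar>h a - h 0\<bar> \<le> I 0 a" for a c
  proof -
    have "ennreal \<bar>h c - h 0\<bar> \<le> ennreal (\<bar>h c - h a\<bar> + \<bar>h a - h 0\<bar>)"
      by (rule ennreal_leI) linarith
    also have "\<dots> = ennreal \<bar>h c - h a\<bar> + ennreal \<bar>h a - h 0\<bar>" by (simp add: ennreal_plus)
    also have "\<dots> \<le> I a c + I 0 a" using that by (intro add_mono) auto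
    finally show ?thesis .
  qed
  define S where "S = {T. 0 \<le> T \<and> T \<le> l \<and> ennreal \<bar>h T - h 0\<bar> \<le> I 0 T}"
  have S0: "0 \<in> S" unfolding S_def using l by simp
  have bdd: "bdd_above S" unfolding S_def by (auto intro: bdd_aboveI[of _ l])
  define T where "T = Sup S"
  have T0: "0 \<le> T" unfolding T_def using cSup_upper[OF S0 bdd] .
  have Tl: "T \<le> l" unfolding T_def using S0 by (intro cSup_least) (auto simp: S_def)
  obtain \<delta> where \<delta>: "\<delta> > 0" and hd: "\<And>s. 0 \<le> s \<Longrightarrow> s \<le> l \<Longrightarrow> \<bar>s - T\<bar> < \<delta> \<Longrightarrow>
        ennreal \<bar>h s - h T\<bar> \<le> I (min s T) (max s T)"
    using loc[OF T0 Tl] unfolding I_def by blast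
  obtain T' where T': "T' \<in> S" "T - \<delta> < T'"
    using less_cSupD[of S "T - \<delta>"] S0 bdd \<delta> unfolding T_def by fastforce
  have T'T: "T' \<le> T" unfolding T_def using cSup_upper[OF T'(1) bdd] .
  have "T \<in> S"
  proof -
    have "ennreal \<bar>h T - h T'\<bar> \<le> I T' T"
      using hd[of T'] T' T'T \<delta> by (auto simp: S_def abs_minus_commute min_def max_def)
    moreover have "ennreal \<bar>h T' - h 0\<bar> \<le> I 0 T'" using T' by (auto simp: S_def)
    ultimately have "ennreal \<bar>h T - h 0\<bar> \<le> I T' T + I 0 T'"
      using T' T'T by (intro tri) (auto simp: S_def)
    also have "\<dots> = I 0 T" using add[of 0 T' T] T' T'T by (auto simp: S_def add.commute)
    finally show ?thesis using T0 Tl by (auto simp: S_def)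
  qed
  have "T = l"
  proof (rule ccontr)
    assume "T \<noteq> l"
    then have Tl': "T < l" using Tl by simp
    define s where "s = min l (T + \<delta>/2)"
    have s: "T < s" "s \<le> l" "\<bar>s - T\<bar> < \<delta>" using Tl' \<delta> by (auto simp: s_def)
    have "ennreal \<bar>h s - h T\<bar> \<le> I T s" using hd[of s] s T0 by (auto simp: min_def max_def)
    moreover have "ennreal \<bar>h T - h 0\<bar> \<le> I 0 T" using \<open>T \<in> S\<close> by (auto simp: S_def)
    ultimately have "ennreal \<bar>h s - h 0\<bar> \<le> I T s + I 0 T" using s T0 by (intro tri) auto
    also have "\<dots> = I 0 s" using add[of 0 T s] s T0 by (simp add: add.commute)
    finally have "s \<in> S" using s T0 by (auto simp: S_def)
    then have "s \<le> T" unfolding T_def using cSup_upper[OF _ bdd] by blast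
    then show False using s by simp
  qed
  then show ?thesis using \<open>T \<in> S\<close> by (auto simp: S_def I_def)
qed

lemma locug:
  fixes u :: "'a::metric_space \<Rightarrow> real" and gr :: "'a \<Rightarrow> real"
  assumes grm: "gr \<in> borel_measurable borel" and nonneg: "\<And>y. 0 \<le> gr y"
    and loc: "\<And>y. \<exists>\<epsilon>>0. \<forall>z. dist z y < \<epsilon> \<longrightarrow> gr y \<le> gr z \<and> \<bar>u z - u y\<bar> \<le> gr y * dist z y"
  shows "upper_gradient u (\<lambda>y. ennreal (gr y))"
  unfolding upper_gradient_def
proof (intro conjI allI impI)
  show "(\<lambda>y. ennreal (gr y)) \<in> borel_measurable borel" using grm by measurable
  fix \<gamma> :: "real \<Rightarrow> 'a" and l assume ap: "arclength_path \<gamma> l"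
  have l: "0 \<le> l" using ap unfolding arclength_path_def by simp
  have lip: "dist (\<gamma> s) (\<gamma> t) \<le> \<bar>s - t\<bar>" if "s \<in> {0..l}" "t \<in> {0..l}" for s t
  proof (cases "s \<le> t")
    case True then show ?thesis using lip_gamma[OF ap, of s t] that by auto
  next
    case False then show ?thesis using lip_gamma[OF ap, of t s] that by (auto simp: dist_commute)
  qed
  have cg: "continuous_on {0..l} \<gamma>"
    unfolding continuous_on_iff
  proof (intro ballI allI impI)
    fix t e assume "t \<in> {0..l}" "(0::real) < e"
    then show "\<exists>d>0. \<forall>s\<in>{0..l}. dist s t < d \<longrightarrow> dist (\<gamma> s) (\<gamma> t) < e"
      using lip by (intro exI[of _ e]) (force simp: dist_real_def)
  qed
  define c where "c t = max 0 (min l t)" for t :: real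
  have cc: "continuous_on UNIV c" unfolding c_def by (intro continuous_intros)
  have cr: "c ` UNIV \<subseteq> {0..l}" using l by (auto simp: c_def)
  have cid: "c t = t" if "t \<in> {0..l}" for t using that by (auto simp: c_def)
  have gcm: "(\<gamma> \<circ> c) \<in> borel_measurable borel"
    by (rule borel_measurable_continuous_onI, rule continuous_on_compose[OF cc])
       (rule continuous_on_subset[OF cg cr])
  define G where "G t = ennreal (gr (\<gamma> (c t)))" for t
  have Gm: "G \<in> borel_measurable borel"
    unfolding G_def using measurable_compose[OF gcm grm] by (simp add: comp_def)
  have "ennreal \<bar>(u \<circ> \<gamma>) l - (u \<circ> \<gamma>) 0\<bar> \<le> set_nn_integral lborel {0..l} G"
  proof (rule chain[OF Gm l])
    fix t assume t: "0 \<le> t" "t \<le> l"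
    obtain \<epsilon> where \<epsilon>: "\<epsilon> > 0" and he: "\<And>z. dist z (\<gamma> t) < \<epsilon> \<Longrightarrow>
       gr (\<gamma> t) \<le> gr z \<and> \<bar>u z - u (\<gamma> t)\<bar> \<le> gr (\<gamma> t) * dist z (\<gamma> t)"
      using loc[of "\<gamma> t"] by blast
    show "\<exists>\<delta>>0. \<forall>s. 0 \<le> s \<and> s \<le> l \<and> \<bar>s - t\<bar> < \<delta> \<longrightarrow>
        ennreal \<bar>(u \<circ> \<gamma>) s - (u \<circ> \<gamma>) t\<bar> \<le> set_nn_integral lborel {min s t..max s t} G"
    proof (intro exI[of _ \<epsilon>] conjI allI impI)
      fix s assume s: "0 \<le> s \<and> s \<le> l \<and> \<bar>s - t\<bar> < \<epsilon>"
      have g0: "0 \<le> gr (\<gamma> t)" using nonneg by simp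
      have "\<bar>u (\<gamma> s) - u (\<gamma> t)\<bar> \<le> gr (\<gamma> t) * dist (\<gamma> s) (\<gamma> t)"
        using he[of "\<gamma> s"] lip[of s t] s t by auto
      also have "\<dots> \<le> gr (\<gamma> t) * \<bar>s - t\<bar>"
        using lip[of s t] s t g0 by (intro mult_left_mono) auto
      finally have 1: "ennreal \<bar>(u \<circ> \<gamma>) s - (u \<circ> \<gamma>) t\<bar> \<le> ennreal (gr (\<gamma> t) * \<bar>s - t\<bar>)"
        by (simp add: ennreal_leI)
      have "ennreal (gr (\<gamma> t) * \<bar>s - t\<bar>) = ennreal (gr (\<gamma> t)) * emeasure lborel {min s t..max s t}"
        using g0 by (simp add: ennreal_mult' min_def max_def abs_if)
      also have "\<dots> = (\<integral>\<^sup>+x. ennreal (gr (\<gamma> t)) * indicator {min s t..max s t} x \<partial>lborel)"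
        by (subst nn_integral_cmult_indicator) auto
      also have "\<dots> \<le> set_nn_integral lborel {min s t..max s t} G"
      proof (rule nn_integral_mono)
        fix x
        show "ennreal (gr (\<gamma> t)) * indicator {min s t..max s t} x \<le> G x * indicator {min s t..max s t} x"
        proof (cases "x \<in> {min s t..max s t}")
          case True
          then have x: "x \<in> {0..l}" using s t by auto
          have "dist (\<gamma> x) (\<gamma> t) < \<epsilon>" using lip[OF x, of t] t s True by auto
          then show ?thesis using he[of "\<gamma> x"] True cid[OF x] by (simp add: G_def ennreal_leI)
        qed simp
      qed
      finally show "ennreal \<bar>(u \<circ> \<gamma>) s - (u \<circ> \<gamma>) t\<bar> \<le> set_nn_integral lborel {min s t..max s t} G"
        using 1 by simp
    qed (use \<epsilon> in simp)
  qed
  also have "set_nn_integral lborel {0..l} G = (\<integral>\<^sup>+ t\<in>{0..l}. ennreal (gr (\<gamma> t)) \<partial>lborel)"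
    by (rule nn_integral_cong) (auto simp: G_def cid indicator_def)
  finally show "ennreal \<bar>u (\<gamma> l) - u (\<gamma> 0)\<bar> \<le> (\<integral>\<^sup>+ t\<in>{0..l}. ennreal (gr (\<gamma> t)) \<partial>lborel)"
    by simp
qed

lemma maxmin_lip:
  fixes A A' B B' D :: real
  assumes "\<bar>A - A'\<bar> \<le> D" "\<bar>B - B'\<bar> \<le> D"
  shows "\<bar>max 0 (min A (min 1 B)) - max 0 (min A' (min 1 B'))\<bar> \<le> D"
  using assms unfolding max_def min_def abs_if by (smt (verit))

lemma maxmin_lip2:
  fixes A A' B B' D :: real
  assumes "1 \<le> A" "1 \<le> A'" "\<bar>B - B'\<bar> \<le> D"
  shows "\<bar>max 0 (min A (min 1 B)) - max 0 (min A' (min 1 B'))\<bar> \<le> D"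
  using assms unfolding max_def min_def abs_if by (smt (verit))

lemma lin_abs:
  fixes s t \<rho> :: real assumes "0 < \<rho>"
  shows "\<bar>(2 - 2 * s / \<rho>) - (2 - 2 * t / \<rho>)\<bar> = (2/\<rho>) * \<bar>s - t\<bar>"
proof -
  have "(2 - 2 * s / \<rho>) - (2 - 2 * t / \<rho>) = (2/\<rho>) * (t - s)"
    using assms by (simp add: field_simps)
  then have "\<bar>(2 - 2 * s / \<rho>) - (2 - 2 * t / \<rho>)\<bar> = \<bar>2/\<rho>\<bar> * \<bar>t - s\<bar>" by (simp only: abs_mult)
  also have "\<dots> = (2/\<rho>) * \<bar>s - t\<bar>" using assms by (simp add: abs_minus_commute)
  finally show ?thesis .
qed

lemma f_facts:
  fixes r \<rho> :: real and f :: "real \<Rightarrow> real"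
  assumes r: "0 < r" "8 * r \<le> \<rho>"
  assumes fdef: "f = (\<lambda>t. max 0 (min (t/r) (min 1 (2 - 2*t/\<rho>))))"
  shows "\<And>t. 0 \<le> f t" "f 0 = 0" "\<And>t. 0 \<le> t \<Longrightarrow> f t \<le> t / r"
    "\<And>s t. \<bar>f s - f t\<bar> \<le> \<bar>s - t\<bar> / r"
    "\<And>s t. r \<le> s \<Longrightarrow> r \<le> t \<Longrightarrow> \<bar>f s - f t\<bar> \<le> (2/\<rho>) * \<bar>s - t\<bar>"
    "\<And>s. r \<le> s \<Longrightarrow> s \<le> \<rho>/2 \<Longrightarrow> f s = 1"
    "\<And>t. t < \<rho> \<Longrightarrow> f t \<le> (2/\<rho>) * (\<rho> - t)"
proof -
  have \<rho>: "0 < \<rho>" using r by simp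
  show "\<And>t. 0 \<le> f t" unfolding fdef by simp
  show "f 0 = 0" unfolding fdef using r by simp
  show "\<And>t. 0 \<le> t \<Longrightarrow> f t \<le> t / r" unfolding fdef using r by simp
  show "\<bar>f s - f t\<bar> \<le> \<bar>s - t\<bar> / r" for s t
  proof -
    have "s/r - t/r = (s - t) / r" by (simp add: diff_divide_distrib)
    then have 1: "\<bar>s/r - t/r\<bar> \<le> \<bar>s - t\<bar> / r" using r by (simp add: abs_divide)
    have "(2/\<rho>) * \<bar>s - t\<bar> \<le> (1/r) * \<bar>s - t\<bar>" using r \<rho>
      by (intro mult_right_mono) (auto simp: field_simps)
    then have 2: "\<bar>(2 - 2 * s / \<rho>) - (2 - 2 * t / \<rho>)\<bar> \<le> \<bar>s - t\<bar> / r"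
      using lin_abs[OF \<rho>, of s t] by simp
    show ?thesis unfolding fdef by (rule maxmin_lip[OF 1 2])
  qed
  show "\<bar>f s - f t\<bar> \<le> (2/\<rho>) * \<bar>s - t\<bar>" if "r \<le> s" "r \<le> t" for s t
  proof -
    have "1 \<le> s / r" "1 \<le> t / r" using that r by simp_all
    then show ?thesis unfolding fdef using lin_abs[OF \<rho>, of s t]
      by (intro maxmin_lip2) auto
  qed
  show "f s = 1" if "r \<le> s" "s \<le> \<rho>/2" for s
  proof -
    have "1 \<le> s / r" using that r by simp
    moreover have "2 * s / \<rho> \<le> 1" using that \<rho> by simp
    ultimately show ?thesis unfolding fdef by simp
  qed
  show "f t \<le> (2/\<rho>) * (\<rho> - t)" if "t < \<rho>" for t
  proof -
    have "(2/\<rho>) * (\<rho> - t) = 2 - 2*t/\<rho>" using \<rho> by (simp add: field_simps)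
    moreover have "2*t/\<rho> < 2" using that \<rho> by (simp add: divide_less_eq)
    ultimately show ?thesis unfolding fdef by simp
  qed
qed


lemma construct_locug:
  fixes x y :: "'a::metric_space" and r \<rho> :: real
  assumes r: "0 < r" "8 * r \<le> \<rho>" and S: "open S1" "open S2"
    "ball x \<rho> - {x} \<subseteq> S1 \<union> S2" "S1 \<inter> S2 \<inter> (ball x \<rho> - {x}) = {}"
  defines "f \<equiv> \<lambda>t. max 0 (min (t/r) (min 1 (2 - 2*t/\<rho>)))"
  defines "u \<equiv> \<lambda>z. if z \<in> S1 \<and> dist x z < \<rho> then f (dist x z) else 0"
  defines "gr \<equiv> \<lambda>z. (if dist x z < 2*r then 1/r else 0) + (if \<rho>/4 < dist x z \<and> dist x z < 2*\<rho> then 2/\<rho> else 0)"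
  shows "\<exists>\<epsilon>>0. \<forall>z. dist z y < \<epsilon> \<longrightarrow> gr y \<le> gr z \<and> \<bar>u z - u y\<bar> \<le> gr y * dist z y"
proof -
  note F = f_facts[OF r f_def[THEN meta_eq_to_obj_eq]]
  have \<rho>: "0 < \<rho>" using r by simp
  have pos: "0 < 1/r" "0 < 2/\<rho>" using r \<rho> by auto
  have ab: "2/\<rho> \<le> 1/r" using r \<rho> by (simp add: field_simps)
  define d where "d = dist x y"
  have tri: "dist x z \<le> d + dist z y" "d \<le> dist x z + dist z y" for z
    unfolding d_def by (metis dist_triangle dist_commute)+
  obtain \<epsilon>g where \<epsilon>g: "\<epsilon>g > 0" "\<And>z. dist z y < \<epsilon>g \<Longrightarrow> gr y \<le> gr z"
  proof -
    define e1 where "e1 = (if d < 2*r then 2*r - d else 1)"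
    define e2 where "e2 = (if \<rho>/4 < d \<and> d < 2*\<rho> then min (d - \<rho>/4) (2*\<rho> - d) else 1)"
    have "e1 > 0" "e2 > 0" unfolding e1_def e2_def by auto
    moreover have "gr y \<le> gr z" if "dist z y < min e1 e2" for z
      using that tri[of z] pos unfolding gr_def e1_def e2_def d_def[symmetric]
      by (auto split: if_splits)
    ultimately show thesis using that[of "min e1 e2"] by auto
  qed
  have g0: "0 \<le> gr y" unfolding gr_def using pos by auto
  have ga: "1/r \<le> gr y" if "d < 2*r" unfolding gr_def d_def[symmetric] using that pos by auto
  have gb: "2/\<rho> \<le> gr y" if "\<rho>/4 < d" "d < 2*\<rho>" unfolding gr_def d_def[symmetric] using that pos by auto
  have gm: "c * dist z y \<le> gr y * dist z y" if "c \<le> gr y" for c z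
    using that by (intro mult_right_mono) auto
  obtain \<epsilon>u where \<epsilon>u: "\<epsilon>u > 0" "\<And>z. dist z y < \<epsilon>u \<Longrightarrow> \<bar>u z - u y\<bar> \<le> gr y * dist z y"
  proof (cases "y = x")
    case True
    have "\<bar>u z - u y\<bar> \<le> gr y * dist z y" for z
    proof -
      have uy: "u y = 0" unfolding u_def using True F(2) by simp
      have "\<bar>u z\<bar> \<le> dist x z / r" unfolding u_def using F(1) F(3)[of "dist x z"] r by auto
      also have "\<dots> = (1/r) * dist z y" using True by (simp add: dist_commute)
      also have "\<dots> \<le> gr y * dist z y" using ga True r unfolding d_def by (intro gm) auto
      finally show ?thesis using uy by simp
    qed
    then show thesis using that[of 1] by auto
  next
    case yx: False
    then have d0: "0 < d" unfolding d_def by simp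
    show thesis
    proof (cases "d < \<rho>")
      case dr: True
      then have yB: "y \<in> ball x \<rho> - {x}" using yx unfolding d_def by auto
      show thesis
      proof (cases "y \<in> S1")
        case yS: True
        obtain e1 where e1: "e1 > 0" "ball y e1 \<subseteq> S1" using openE[OF S(1) yS] by blast
        have "\<bar>u z - u y\<bar> \<le> gr y * dist z y" if z: "dist z y < min e1 (min (\<rho> - d) r)" for z
        proof -
          have zS: "z \<in> S1" using z e1 by (auto simp: dist_commute)
          have dz: "dist x z < \<rho>" using tri[of z] z by auto
          have uz: "u z = f (dist x z)" "u y = f d" unfolding u_def d_def using zS dz yS dr d_def by auto
          have "\<bar>f (dist x z) - f d\<bar> \<le> gr y * dist z y"
          proof (cases "d < 2*r")
            case True
            have "\<bar>f (dist x z) - f d\<bar> \<le> \<bar>dist x z - d\<bar> / r" by (rule F(4))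
            also have "\<dots> \<le> (1/r) * dist z y" using tri[of z] r by (simp add: field_simps)
            also have "\<dots> \<le> gr y * dist z y" using ga True by (intro gm) auto
            finally show ?thesis .
          next
            case False
            show ?thesis
            proof (cases "d \<le> \<rho>/4")
              case True
              have "f (dist x z) = 1" "f d = 1" using tri[of z] z False True r
                by (intro F(6); linarith)+
              then show ?thesis using g0 by simp
            next
              case d4: False
              have "\<bar>f (dist x z) - f d\<bar> \<le> (2/\<rho>) * \<bar>dist x z - d\<bar>"
                using tri[of z] z d4 r by (intro F(5)) linarith+
              also have "\<dots> \<le> (2/\<rho>) * dist z y" using tri[of z] pos
                by (intro mult_left_mono) auto
              also have "\<dots> \<le> gr y * dist z y" using gb d4 dr by (intro gm) auto
              finally show ?thesis .
            qed
          qed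
          then show ?thesis using uz by simp
        qed
        then show thesis using that[of "min e1 (min (\<rho> - d) r)"] e1 dr r by auto
      next
        case yS: False
        then have yS2: "y \<in> S2" using yB S(3) by auto
        obtain e2 where e2: "e2 > 0" "ball y e2 \<subseteq> S2" using openE[OF S(2) yS2] by blast
        have "\<bar>u z - u y\<bar> \<le> gr y * dist z y" if z: "dist z y < min e2 (min (\<rho> - d) d)" for z
        proof -
          have zS: "z \<in> S2" using z e2 by (auto simp: dist_commute)
          have dz: "dist x z < \<rho>" "0 < dist x z" using tri[of z] z by auto
          then have "z \<notin> S1" using S(4) zS by auto
          then have "u z = 0" "u y = 0" unfolding u_def using yS by auto
          then show ?thesis using g0 by simp
        qed
        then show thesis using that[of "min e2 (min (\<rho> - d) d)"] e2 dr d0 by auto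
      qed
    next
      case dr: False
      show thesis
      proof (cases "d < 2*\<rho>")
        case True
        have "\<bar>u z - u y\<bar> \<le> gr y * dist z y" for z
        proof -
          have uy: "u y = 0" unfolding u_def d_def[symmetric] using dr by simp
          have "\<bar>u z\<bar> \<le> (2/\<rho>) * dist z y"
          proof (cases "z \<in> S1 \<and> dist x z < \<rho>")
            case True
            then have "\<bar>u z\<bar> = f (dist x z)" unfolding u_def using F(1) by simp
            also have "\<dots> \<le> (2/\<rho>) * (\<rho> - dist x z)" using True F(7) by auto
            also have "\<dots> \<le> (2/\<rho>) * dist z y" using tri[of z] dr pos
              by (intro mult_left_mono) auto
            finally show ?thesis .
          next
            case False
            then have "u z = 0" unfolding u_def by auto
            then show ?thesis using pos by simp
          qed
          also have "\<dots> \<le> gr y * dist z y" using gb dr True \<rho> by (intro gm) auto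
          finally show ?thesis using uy by simp
        qed
        then show thesis using that[of 1] by auto
      next
        case False
        have "\<bar>u z - u y\<bar> \<le> gr y * dist z y" if z: "dist z y < \<rho>" for z
        proof -
          have "\<rho> \<le> dist x z" using tri[of z] z False by auto
          then have "u z = 0" "u y = 0" unfolding u_def d_def[symmetric] using dr by auto
          then show ?thesis using g0 by simp
        qed
        then show thesis using that[of \<rho>] \<rho> by auto
      qed
    qed
  qed
  show ?thesis
    using \<epsilon>g \<epsilon>u by (intro exI[of _ "min \<epsilon>g \<epsilon>u"]) auto
qed



lemma near:
  fixes x :: "'a::metric_space"
  assumes "connected U" "open S1" "open S2" "U - {x} \<subseteq> S1 \<union> S2" "S1 \<inter> S2 \<inter> (U - {x}) = {}"
    "S1 \<inter> (U - {x}) \<noteq> {}" "S2 \<inter> (U - {x}) \<noteq> {}" "\<epsilon> > 0"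
  shows "\<exists>a. a \<in> S1 \<and> a \<in> U \<and> a \<noteq> x \<and> dist x a < \<epsilon>"
proof (rule ccontr)
  assume "\<not> ?thesis"
  then have e: "(S1 - {x}) \<inter> ball x \<epsilon> \<inter> U = {}" by auto
  have "open (S1 - {x})" using assms(2) by (simp add: open_delete)
  moreover have "open (S2 \<union> ball x \<epsilon>)" using assms(3) by auto
  moreover have "U \<subseteq> (S1 - {x}) \<union> (S2 \<union> ball x \<epsilon>)" using assms(4,8) by auto
  moreover have "(S1 - {x}) \<inter> (S2 \<union> ball x \<epsilon>) \<inter> U = {}" using assms(5) e by auto
  moreover have "(S1 - {x}) \<inter> U \<noteq> {}" using assms(6) by auto
  moreover have "(S2 \<union> ball x \<epsilon>) \<inter> U \<noteq> {}" using assms(7) by auto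
  ultimately have "\<not> connected U" unfolding connected_def by blast
  then show False using assms(1) by simp
qed

lemma posmeas:
  fixes M :: "'a::metric_space measure"
  assumes "sets M = sets borel" "\<And>z r. 0 < r \<Longrightarrow> 0 < emeasure M (ball z r)"
    "open E" "a \<in> E"
  shows "0 < emeasure M E"
proof -
  obtain e where e: "e > 0" "ball a e \<subseteq> E" using openE[OF assms(3,4)] by blast
  have "E \<in> sets M" using assms(1,3) by simp
  then have "emeasure M (ball a e) \<le> emeasure M E" using e by (intro emeasure_mono) auto
  then show ?thesis using assms(2)[OF e(1), of a] by simp
qed

theorem theorem1p3:
  fixes M :: "'a::{metric_space, complete_space} measure" and p :: real and x :: 'a
  assumes "locally_compact_space (euclidean :: 'a topology)"
    and "length_space TYPE('a)"
    and "sets M = sets borel"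
    and "\<And>z r. 0 < r \<Longrightarrow> 0 < emeasure M (ball z r) \<and> emeasure M (ball z r) < \<infinity>"
    and "1 \<le> p"
    and "poincare_1p M p"
    and "Liminf (at_right 0) (\<lambda>r. emeasure M (ball x r) / ennreal (r powr p)) = 0"
  shows "\<not> local_cut_point x"
proof
  assume "local_cut_point x"
  then obtain U where U: "connected U" "x \<in> interior U" "\<not> connected (U - {x})"
    unfolding local_cut_point_def by blast
  obtain \<rho> where \<rho>: "0 < \<rho>" "ball x \<rho> \<subseteq> U" using U(2) mem_interior by blast
  obtain S1 S2 where S: "open S1" "open S2" "U - {x} \<subseteq> S1 \<union> S2" "S1 \<inter> S2 \<inter> (U - {x}) = {}"
     "S1 \<inter> (U - {x}) \<noteq> {}" "S2 \<inter> (U - {x}) \<noteq> {}"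
    using U(3) unfolding connected_def by blast
  have S': "ball x \<rho> - {x} \<subseteq> S1 \<union> S2" "S1 \<inter> S2 \<inter> (ball x \<rho> - {x}) = {}"
    using S(3,4) \<rho>(2) by auto
  have p0: "0 < p" using assms(5) by simp
  have sets: "A \<in> sets M" if "open A" for A using assms(3) that by simp
  have sets2: "A \<in> sets M" if "closed A" for A using assms(3) that by simp
  obtain a1 where a1: "a1 \<in> S1" "a1 \<in> U" "a1 \<noteq> x" "dist x a1 < \<rho>/4"
    using near[OF U(1) S, of "\<rho>/4"] \<rho> by auto
  have S21: "U - {x} \<subseteq> S2 \<union> S1" "S2 \<inter> S1 \<inter> (U - {x}) = {}" using S(3,4) by auto
  obtain a2 where a2: "a2 \<in> S2" "a2 \<in> U" "a2 \<noteq> x" "dist x a2 < \<rho>/4"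
    using near[OF U(1) S(2,1) S21 S(6,5), of "\<rho>/4"] \<rho> by auto
  define P where "P = ball x (\<rho>/4)"
  define r0 where "r0 = dist x a1 / 2"
  have r0: "0 < r0" "r0 < dist x a1" using a1(3) by (auto simp: r0_def)
  define E1 where "E1 = P \<inter> S1 - cball x r0"
  define E2 where "E2 = P \<inter> S2 - {x}"
  have oE: "open E1" "open E2" unfolding E1_def E2_def P_def using S(1,2)
    by (auto intro!: open_Diff open_Int simp: open_delete)
  have aE: "a1 \<in> E1" "a2 \<in> E2" unfolding E1_def E2_def P_def using a1 a2 r0 by auto
  have EP: "E1 \<subseteq> P" "E2 \<subseteq> P" unfolding E1_def E2_def by auto
  have finP: "emeasure M P \<noteq> \<infinity>" unfolding P_def using assms(4)[of "\<rho>/4" x] \<rho> by auto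
  have posP: "0 < emeasure M P" unfolding P_def using assms(4)[of "\<rho>/4" x] \<rho> by auto
  have posE: "0 < emeasure M E1" "0 < emeasure M E2"
    using posmeas[OF assms(3) _ oE(1) aE(1)] posmeas[OF assms(3) _ oE(2) aE(2)] assms(4) by auto
  have finE: "emeasure M E1 \<noteq> \<infinity>" "emeasure M E2 \<noteq> \<infinity>"
  proof -
    have Ps: "P \<in> sets M" unfolding P_def by (rule sets) simp
    show "emeasure M E1 \<noteq> \<infinity>" "emeasure M E2 \<noteq> \<infinity>"
      using emeasure_mono[OF EP(1) Ps] emeasure_mono[OF EP(2) Ps] finP by (auto simp: top_unique)
  qed
  define mP where "mP = measure M P"
  define m1 where "m1 = measure M E1"
  define m2 where "m2 = measure M E2"
  have eP: "emeasure M P = ennreal mP" unfolding mP_def using finP by (simp add: emeasure_eq_ennreal_measure)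
  have e1: "emeasure M E1 = ennreal m1" unfolding m1_def using finE by (simp add: emeasure_eq_ennreal_measure)
  have e2: "emeasure M E2 = ennreal m2" unfolding m2_def using finE by (simp add: emeasure_eq_ennreal_measure)
  have mpos: "0 < mP" "0 < m1" "0 < m2" using posP posE eP e1 e2 by auto
  define mm where "mm = min m1 m2"
  have mm: "0 < mm" "mm \<le> m1" "mm \<le> m2" using mpos by (auto simp: mm_def)
  have "\<rho>/4 > 0" using \<rho>(1) by simp
  from assms(6)[unfolded poincare_1p_def, rule_format, OF this]
  obtain C where C: "C > 0" and PI: "\<forall>x r u g. 0 < r \<and> r \<le> \<rho>/4 \<and>
      u \<in> borel_measurable M \<and> upper_gradient u g \<longrightarrow>
      (\<integral>\<^sup>+ y\<in>ball x r. ennreal \<bar>u y - ball_mean M (ball x r) u\<bar> \<partial>M) / emeasure M (ball x r)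
        \<le> ennreal (C * r) *
           enn_powr ((\<integral>\<^sup>+ y\<in>ball x r. enn_powr (g y) p \<partial>M) / emeasure M (ball x r)) (1 / p)"
    by blast
  define K where "K = C * (\<rho>/4)"
  have K: "0 < K" using C \<rho> by (simp add: K_def)
  define T where "T = mm / mP"
  have T: "0 < T" using mm mpos by (simp add: T_def)
  define \<eta> where "\<eta> = mP / 2 powr p * (T/(2*K)) powr p"
  have \<eta>: "0 < \<eta>" using mpos T K by (simp add: \<eta>_def)
  obtain r' where r': "0 < r'" "r' < min (2*r0) (\<rho>/4)"
     "emeasure M (ball x r') / ennreal (r' powr p) < ennreal \<eta>"
  proof -
    have "\<not> eventually (\<lambda>r. ennreal \<eta> \<le> emeasure M (ball x r) / ennreal (r powr p)) (at_right 0)"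
    proof
      assume "eventually (\<lambda>r. ennreal \<eta> \<le> emeasure M (ball x r) / ennreal (r powr p)) (at_right 0)"
      then have "ennreal \<eta> \<le> Liminf (at_right 0) (\<lambda>r. emeasure M (ball x r) / ennreal (r powr p))"
        by (rule Liminf_bounded)
      then show False using assms(7) \<eta> by simp
    qed
    then have "\<not> (\<forall>y>0. y < min (2*r0) (\<rho>/4) \<longrightarrow> ennreal \<eta> \<le> emeasure M (ball x y) / ennreal (y powr p))"
      unfolding eventually_at_right_field using r0 \<rho> by (metis min_less_iff_conj mult_pos_pos zero_less_divide_iff zero_less_numeral)
    then show thesis using that by (auto simp: not_le)
  qed
  define \<mu>r where "\<mu>r = measure M (ball x r')"
  have e\<mu>: "emeasure M (ball x r') = ennreal \<mu>r"
    unfolding \<mu>r_def using assms(4)[OF r'(1), of x] by (intro emeasure_eq_ennreal_measure) (simp add: top.not_eq_extremum)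
  have \<mu>r: "\<mu>r / r' powr p < \<eta>"
  proof -
    have "ennreal (\<mu>r / r' powr p) < ennreal \<eta>"
      using r'(3) r'(1) by (simp add: e\<mu> divide_ennreal \<mu>r_def)
    then show ?thesis by (subst (asm) ennreal_less_iff) (auto simp: \<mu>r_def)
  qed
  define r where "r = r'/2"
  have r: "0 < r" "8 * r \<le> \<rho>" "r < r0" "2 * r = r'" using r' by (auto simp: r_def)
  define f where "f = (\<lambda>t::real. max 0 (min (t/r) (min 1 (2 - 2*t/\<rho>))))"
  define u where "u = (\<lambda>z. if z \<in> S1 \<and> dist x z < \<rho> then f (dist x z) else 0)"
  define gr where "gr = (\<lambda>z. (if dist x z < 2*r then 1/r else 0) + (if \<rho>/4 < dist x z \<and> dist x z < 2*\<rho> then 2/\<rho> else 0))"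
  note F = f_facts[OF r(1,2) f_def]
  have [measurable]: "S1 \<in> sets borel" using S(1) by simp
  have [measurable]: "(\<lambda>z. dist x z) \<in> borel_measurable borel"
    by (intro borel_measurable_continuous_onI continuous_intros)
  have grm: "gr \<in> borel_measurable borel" unfolding gr_def by measurable
  have gr0: "0 \<le> gr y" for y using r \<rho> by (simp add: gr_def)
  have ug: "upper_gradient u (\<lambda>y. ennreal (gr y))"
  proof (rule locug[OF grm gr0])
    fix y show "\<exists>\<epsilon>>0. \<forall>z. dist z y < \<epsilon> \<longrightarrow> gr y \<le> gr z \<and> \<bar>u z - u y\<bar> \<le> gr y * dist z y"
      unfolding u_def gr_def f_def by (rule construct_locug[OF r(1,2) S(1,2) S'])
  qed
  have um: "u \<in> borel_measurable M"
  proof -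
    have "u \<in> borel_measurable borel" unfolding u_def f_def by measurable
    then show ?thesis by (subst measurable_cong_sets[OF assms(3) refl])
  qed
  have ineq: "(\<integral>\<^sup>+ y\<in>P. ennreal \<bar>u y - ball_mean M P u\<bar> \<partial>M) / emeasure M P
        \<le> ennreal K * enn_powr ((\<integral>\<^sup>+ y\<in>P. enn_powr (ennreal (gr y)) p \<partial>M) / emeasure M P) (1 / p)"
    using PI[rule_format, where x=x and r="\<rho>/4" and u=u and g="\<lambda>y. ennreal (gr y)"] \<rho> um ug unfolding P_def K_def by simp
  define c where "c = ball_mean M P u"
  have lhs: "ennreal mm \<le> (\<integral>\<^sup>+ y\<in>P. ennreal \<bar>u y - c\<bar> \<partial>M)"
  proof -
    have pw: "ennreal \<bar>1 - c\<bar> * indicator E1 y + ennreal \<bar>c\<bar> * indicator E2 y \<le> ennreal \<bar>u y - c\<bar> * indicator P y" for y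
    proof (cases "y \<in> E1")
      case True
      then have y: "y \<in> S1" "dist x y < \<rho>/4" "r0 < dist x y" unfolding E1_def P_def by auto
      then have "y \<notin> E2" using S'(2) r0 \<rho> unfolding E2_def by auto
      moreover have "u y = 1" unfolding u_def using y r \<rho> by (auto intro!: F(6))
      ultimately show ?thesis using True EP by (auto simp: abs_minus_commute)
    next
      case False
      show ?thesis
      proof (cases "y \<in> E2")
        case True
        then have y: "y \<in> S2" "dist x y < \<rho>/4" "y \<noteq> x" unfolding E2_def P_def by auto
        then have "y \<notin> S1" using S'(2) \<rho> by auto
        then have "u y = 0" unfolding u_def by simp
        then show ?thesis using True False EP by auto
      qed (use False in auto)
    qed
    have "(\<integral>\<^sup>+ y. ennreal \<bar>1 - c\<bar> * indicator E1 y + ennreal \<bar>c\<bar> * indicator E2 y \<partial>M)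
        = ennreal \<bar>1 - c\<bar> * emeasure M E1 + ennreal \<bar>c\<bar> * emeasure M E2"
      using sets[OF oE(1)] sets[OF oE(2)] by (subst nn_integral_add) (auto simp: nn_integral_cmult_indicator)
    also have "\<dots> = ennreal (\<bar>1 - c\<bar> * m1 + \<bar>c\<bar> * m2)"
      using mpos by (simp add: e1 e2 ennreal_mult' ennreal_plus[symmetric])
    finally have 1: "(\<integral>\<^sup>+ y. ennreal \<bar>1 - c\<bar> * indicator E1 y + ennreal \<bar>c\<bar> * indicator E2 y \<partial>M)
        = ennreal (\<bar>1 - c\<bar> * m1 + \<bar>c\<bar> * m2)" .
    have one: "1 \<le> \<bar>1 - c\<bar> + \<bar>c\<bar>" by arith
    have "mm \<le> (\<bar>1 - c\<bar> + \<bar>c\<bar>) * mm" using mult_right_mono[OF one, of mm] mm by simp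
    also have "\<dots> \<le> \<bar>1 - c\<bar> * m1 + \<bar>c\<bar> * m2" using mm
      by (simp add: distrib_right add_mono mult_left_mono)
    finally have "ennreal mm \<le> ennreal (\<bar>1 - c\<bar> * m1 + \<bar>c\<bar> * m2)" by (simp add: ennreal_leI)
    also have "\<dots> \<le> (\<integral>\<^sup>+ y\<in>P. ennreal \<bar>u y - c\<bar> \<partial>M)"
      unfolding 1[symmetric] by (rule nn_integral_mono) (rule pw)
    finally show ?thesis .
  qed
  define Q where "Q = (1/r) powr p * \<mu>r / mP"
  have Q0: "0 \<le> Q" using mpos by (simp add: Q_def \<mu>r_def)
  have int: "(\<integral>\<^sup>+ y\<in>P. enn_powr (ennreal (gr y)) p \<partial>M) = ennreal ((1/r) powr p * \<mu>r)"
  proof -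
    have "(\<integral>\<^sup>+ y\<in>P. enn_powr (ennreal (gr y)) p \<partial>M) = (\<integral>\<^sup>+ y. ennreal ((1/r) powr p) * indicator (ball x r') y \<partial>M)"
    proof (rule nn_integral_cong)
      fix y
      show "enn_powr (ennreal (gr y)) p * indicator P y = ennreal ((1/r) powr p) * indicator (ball x r') y"
        using r r' \<rho> p0 unfolding P_def gr_def enn_powr_def by (auto simp: indicator_def)
    qed
    also have "\<dots> = ennreal ((1/r) powr p) * emeasure M (ball x r')" using sets[of "ball x r'"]
      by (subst nn_integral_cmult_indicator) auto
    finally show ?thesis by (simp add: e\<mu> ennreal_mult' \<mu>r_def)
  qed
  have rhs: "ennreal K * enn_powr ((\<integral>\<^sup>+ y\<in>P. enn_powr (ennreal (gr y)) p \<partial>M) / emeasure M P) (1 / p)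
      = ennreal (K * Q powr (1/p))"
  proof -
    have "(\<integral>\<^sup>+ y\<in>P. enn_powr (ennreal (gr y)) p \<partial>M) / emeasure M P = ennreal Q"
      unfolding int eP Q_def using mpos by (subst divide_ennreal) (auto simp: \<mu>r_def)
    then show ?thesis using K Q0 by (simp add: enn_powr_def ennreal_mult')
  qed
  have "ennreal T \<le> ennreal (K * Q powr (1/p))"
  proof -
    have "ennreal T = ennreal mm / emeasure M P" unfolding T_def eP using mm mpos by (simp add: divide_ennreal)
    also have "\<dots> \<le> (\<integral>\<^sup>+ y\<in>P. ennreal \<bar>u y - c\<bar> \<partial>M) / emeasure M P"
      by (rule divide_right_mono_ennreal[OF lhs])
    also have "\<dots> \<le> ennreal (K * Q powr (1/p))" using ineq rhs unfolding c_def by simp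
    finally show ?thesis .
  qed
  then have TQ: "T \<le> K * Q powr (1/p)" using K by (subst (asm) ennreal_le_iff) (auto)
  have "Q = 2 powr p * (\<mu>r / r' powr p) / mP"
    using r r' by (simp add: Q_def r_def powr_divide)
  also have "\<dots> \<le> 2 powr p * \<eta> / mP" using \<mu>r mpos
    by (intro divide_right_mono mult_left_mono) auto
  also have "\<dots> = (T/(2*K)) powr p" unfolding \<eta>_def using mpos by simp
  finally have "Q powr (1/p) \<le> ((T/(2*K)) powr p) powr (1/p)"
    using Q0 p0 by (intro powr_mono2) auto
  also have "\<dots> = T/(2*K)" using p0 T K by (simp add: powr_powr)
  finally have "K * Q powr (1/p) \<le> K * (T/(2*K))" using K by (intro mult_left_mono) auto
  also have "\<dots> = T/2" using K by simp
  finally show False using TQ T by simp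
qed


end
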